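(* Let $\varphi$ be a strongly convex function and let $\mu$ be a positive finite Borel measure on $\mathbb{D}$. Then $\|B(\mu)\|_{(L^\varphi)^*}<\infty$ if and only if $\int_{\mathbb{D}}h\,d\mu<\infty$ for every $h\in\operatorname{Har}^+_\varphi$. Moreover, $$\|B(\mu)\|_{(L^\varphi)^*}=\sup\Big\{\int_{\mathbb{D}}h\,d\mu:\ h=P[w]\in\operatorname{Har}^+_\varphi,\ \|w\|_\varphi\le1\Big\}.$$
   Context: A function $\varphi:\mathbb{R}\to[0,\infty)$ is strongly convex if it is convex, nondecreasing, $\lim_{t\to\infty}\varphi(t)/t=\infty$, and there are $M,K\ge0$, $t_0\in\mathbb{R}$ with $\varphi(t+2)\le M\varphi(t)+K$ for $t\ge t_0$. $L^\varphi(\mathbb{T})$ is the Orlicz space of measurable $u$ with $\varphi\circ|u|\in L^1(m)$ ($m$ normalized Lebesgue measure on $\mathbb{T}$); $\varphi$ is modified on some $[0,t_0]$ to a convex function on $[0,\infty)$ vanishing at $0$, $L^\varphi$ carries the norm $\|u\|_\varphi=\inf\{t>0:\int\varphi(|u|/t)dm\le t\}$, and $(L^\varphi)^*$ is the dual with dual norm. $P[w](z)=\int_{\mathbb{T}}P_z(\zeta)w(\zeta)dm(\zeta)$ with $P_z(\zeta)=\frac{1-|z|^2}{|\zeta-z|^2}$; $\operatorname{Har}^+_\varphi=\{P[w]:0\le w\in L^\varphi\}$. The Poisson balayage is $B(\mu)(\zeta)=\int_{\mathbb{D}}P_z(\zeta)\,d\mu(z)$. *)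

theory Defs
  imports "HOL-Analysis.Analysis"
begin

definition strongly_convex :: "(real \<Rightarrow> real) \<Rightarrow> bool" where
  "strongly_convex \<phi> \<longleftrightarrow>
     (\<forall>t. 0 \<le> \<phi> t) \<and> convex_on UNIV \<phi> \<and> mono \<phi> \<and>
     filterlim (\<lambda>t. \<phi> t / t) at_top at_top \<and>
     (\<exists>M K t0. M \<ge> 0 \<and> K \<ge> 0 \<and> (\<forall>t\<ge>t0. \<phi> (t + 2) \<le> M * \<phi> t + K))"

definition admissible_modification :: "(real \<Rightarrow> real) \<Rightarrow> (real \<Rightarrow> real) \<Rightarrow> bool" where
  "admissible_modification \<phi> \<psi> \<longleftrightarrow>
     convex_on {0..} \<psi> \<and> \<psi> 0 = 0 \<and> (\<forall>t\<ge>0. 0 \<le> \<psi> t) \<and>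
     (\<exists>t0. \<forall>t\<ge>t0. \<psi> t = \<phi> t)"

definition circle_measure :: "complex measure" where
  "circle_measure = distr (uniform_measure lborel {0..2*pi}) borel cis"

definition poisson_kernel :: "complex \<Rightarrow> complex \<Rightarrow> real" where
  "poisson_kernel z \<zeta> = (1 - (cmod z)\<^sup>2) / (cmod (\<zeta> - z))\<^sup>2"

definition orlicz_space :: "(real \<Rightarrow> real) \<Rightarrow> (complex \<Rightarrow> real) set" where
  "orlicz_space \<phi> = {u. u \<in> borel_measurable circle_measure \<and>
                        integrable circle_measure (\<lambda>\<zeta>. \<phi> \<bar>u \<zeta>\<bar>)}"

definition orlicz_norm :: "(real \<Rightarrow> real) \<Rightarrow> (complex \<Rightarrow> real) \<Rightarrow> real" where
  "orlicz_norm \<psi> u = Inf {t. 0 < t \<and>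
       (\<integral>\<^sup>+ \<zeta>. ennreal (\<psi> (\<bar>u \<zeta>\<bar> / t)) \<partial>circle_measure) \<le> ennreal t}"

definition poisson_integral :: "(complex \<Rightarrow> real) \<Rightarrow> complex \<Rightarrow> real" where
  "poisson_integral w z = (\<integral> \<zeta>. poisson_kernel z \<zeta> * w \<zeta> \<partial>circle_measure)"

definition balayage :: "complex measure \<Rightarrow> complex \<Rightarrow> ennreal" where
  "balayage \<mu> \<zeta> = (\<integral>\<^sup>+ z. ennreal (poisson_kernel z \<zeta>) \<partial>\<mu>)"

text \<open>Dual norm of the (nonnegative) function g as a functional u \<mapsto> \<integral> u g dm on L^\<phi>.
  For g \<ge> 0 this equals sup { |\<integral> u g dm| : \<parallel>u\<parallel> \<le> 1 } (possibly \<infinity>).\<close>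
definition dual_norm :: "(real \<Rightarrow> real) \<Rightarrow> (real \<Rightarrow> real) \<Rightarrow> (complex \<Rightarrow> ennreal) \<Rightarrow> ennreal" where
  "dual_norm \<phi> \<psi> g = (SUP u \<in> {u. u \<in> orlicz_space \<phi> \<and> orlicz_norm \<psi> u \<le> 1}.
       \<integral>\<^sup>+ \<zeta>. ennreal \<bar>u \<zeta>\<bar> * g \<zeta> \<partial>circle_measure)"

end

theory Submission
  imports Defs "HOL-Probability.Probability"
begin


lemma circle_space[simp]: "space circle_measure = UNIV"
  by (simp add: circle_measure_def)

lemma circle_sets[simp, measurable_cong]: "sets circle_measure = sets borel"
  by (simp add: circle_measure_def)

lemma cis_meas: "cis \<in> borel_measurable (uniform_measure lborel {0..2*pi})"
proof -
  have "cis \<in> borel_measurable borel"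
    by (intro borel_measurable_continuous_onI continuous_intros)
  moreover have "sets (uniform_measure lborel {0..2*pi}) = sets borel" by simp
  ultimately show ?thesis using measurable_cong_sets[of "uniform_measure lborel {0..2*pi}" borel borel borel] by simp
qed

lemma circle_prob: "prob_space circle_measure"
  unfolding circle_measure_def
  apply (rule prob_space.prob_space_distr)
    apply (rule prob_space_uniform_measure)
     apply simp
    apply simp
  apply (rule cis_meas)
  done

lemma circle_AE: "AE \<zeta> in circle_measure. cmod \<zeta> = 1"
proof -
  have m: "{\<zeta>. cmod \<zeta> \<noteq> 1} \<in> sets borel"
    by measurable
  have "emeasure circle_measure {\<zeta>. cmod \<zeta> \<noteq> 1} = 0"
    unfolding circle_measure_def
    apply (subst emeasure_distr)
      apply (rule cis_meas)
     apply (simp add: m)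
    apply simp
    done
  then have "{\<zeta>. cmod \<zeta> \<noteq> 1} \<in> null_sets circle_measure"
    using m by (simp add: null_sets_def)
  then show ?thesis
    by (rule AE_I') auto
qed

lemma meas_circ: "(f::complex \<Rightarrow> 'a::topological_space) \<in> borel_measurable circle_measure \<longleftrightarrow> f \<in> borel_measurable borel"
  by (simp add: measurable_def)

lemma pk_meas: "(\<lambda>p. poisson_kernel (fst p) (snd p)) \<in> borel_measurable (borel \<Otimes>\<^sub>M borel)"
  unfolding poisson_kernel_def by measurable

lemma pk_nonneg: "cmod z \<le> 1 \<Longrightarrow> 0 \<le> poisson_kernel z \<zeta>"
  unfolding poisson_kernel_def
  by (intro divide_nonneg_nonneg) (auto simp: power_le_one)

lemma pk_bound:
  assumes "cmod z < 1" "cmod \<zeta> = 1"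
  shows "poisson_kernel z \<zeta> \<le> 1 / (1 - cmod z)\<^sup>2"
proof -
  have d: "1 - cmod z \<le> cmod (\<zeta> - z)"
    using norm_triangle_ineq2[of \<zeta> z] assms by simp
  have pos: "0 < 1 - cmod z" using assms by simp
  have "(1 - cmod z)\<^sup>2 \<le> (cmod (\<zeta> - z))\<^sup>2"
    using d pos by (intro power_mono) auto
  moreover have "0 \<le> 1 - (cmod z)\<^sup>2" "1 - (cmod z)\<^sup>2 \<le> 1"
    using assms by (auto simp: power_le_one)
  ultimately show ?thesis
    unfolding poisson_kernel_def
    using pos by (intro frac_le) auto
qed



lemma phi_facts:
  assumes "strongly_convex \<phi>"
  shows "\<And>t. 0 \<le> \<phi> t" "convex_on UNIV \<phi>" "mono \<phi>"
    "\<exists>T>0. \<forall>t\<ge>0. t \<le> \<phi> t + T"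
    "\<And>x. isCont \<phi> x" "\<phi> \<in> borel_measurable borel"
proof -
  show nn: "\<And>t. 0 \<le> \<phi> t" "convex_on UNIV \<phi>" "mono \<phi>"
    using assms by (auto simp: strongly_convex_def)
  have "filterlim (\<lambda>t. \<phi> t / t) at_top at_top"
    using assms by (auto simp: strongly_convex_def)
  then have "eventually (\<lambda>t. 1 \<le> \<phi> t / t) at_top"
    by (simp add: filterlim_at_top)
  then obtain N where N: "\<And>t. t \<ge> N \<Longrightarrow> 1 \<le> \<phi> t / t"
    by (auto simp: eventually_at_top_linorder)
  show "\<exists>T>0. \<forall>t\<ge>0. t \<le> \<phi> t + T"
  proof (intro exI[of _ "max N 1"] conjI allI impI)
    fix t :: real assume "0 \<le> t"
    show "t \<le> \<phi> t + max N 1"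
    proof (cases "t \<ge> max N 1")
      case True
      have tp: "t > 0" using True by simp
      have "1 \<le> \<phi> t / t" using N[of t] True by simp
      then have "t \<le> \<phi> t" using tp by (simp add: le_divide_eq)
      then show ?thesis by simp
    next
      case False
      then have "t < max N 1" by (simp only: not_le)
      then show ?thesis using nn(1)[of t] by linarith
    qed
  qed simp
  have "continuous_on UNIV \<phi>"
    by (rule convex_on_continuous) (auto simp: nn)
  then show "\<And>x. isCont \<phi> x"
    by (simp add: continuous_on_eq_continuous_at)
  show "\<phi> \<in> borel_measurable borel"
    by (rule borel_measurable_mono) (rule nn)
qed

lemma psi_facts:
  assumes "admissible_modification \<phi> \<psi>" "mono \<phi>" "\<And>t. 0 \<le> \<phi> t"
  obtains t1 where "t1 \<ge> 0" "\<And>s. s \<ge> t1 \<Longrightarrow> \<psi> s = \<phi> s"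
    "\<And>x c. 0 \<le> x \<Longrightarrow> 0 \<le> c \<Longrightarrow> c \<le> 1 \<Longrightarrow> \<psi> (c * x) \<le> c * \<psi> x"
    "\<And>s t. 0 \<le> s \<Longrightarrow> s \<le> t \<Longrightarrow> \<psi> s \<le> \<psi> t"
    "\<And>s. 0 \<le> s \<Longrightarrow> \<psi> s \<le> \<phi> s + \<psi> t1"
    "\<And>s. 0 \<le> s \<Longrightarrow> \<phi> s \<le> \<psi> s + \<phi> t1"
    "\<And>s. 0 \<le> s \<Longrightarrow> 0 \<le> \<psi> s"
proof -
  have cv: "convex_on {0..} \<psi>" and z: "\<psi> 0 = 0" and nn: "\<And>s. 0 \<le> s \<Longrightarrow> 0 \<le> \<psi> s"
    and "\<exists>t0. \<forall>t\<ge>t0. \<psi> t = \<phi> t"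
    using assms(1) by (auto simp: admissible_modification_def)
  then obtain t0 where t0: "\<And>t. t \<ge> t0 \<Longrightarrow> \<psi> t = \<phi> t" by blast
  define t1 where "t1 = max t0 0"
  have t1: "t1 \<ge> 0" "\<And>s. s \<ge> t1 \<Longrightarrow> \<psi> s = \<phi> s"
    using t0 by (auto simp: t1_def)
  have sc: "\<psi> (c * x) \<le> c * \<psi> x" if "0 \<le> x" "0 \<le> c" "c \<le> 1" for x c
  proof -
    have "\<psi> ((1 - c) *\<^sub>R 0 + c *\<^sub>R x) \<le> (1 - c) * \<psi> 0 + c * \<psi> x"
      using that by (intro convex_onD[OF cv]) auto
    then show ?thesis using z by simp
  qed
  have mo: "\<psi> s \<le> \<psi> t" if "0 \<le> s" "s \<le> t" for s t
  proof (cases "t = 0")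
    case True then show ?thesis using that by simp
  next
    case False
    then have tp: "t > 0" using that by simp
    have "\<psi> ((s / t) * t) \<le> (s / t) * \<psi> t"
      using that tp by (intro sc) auto
    also have "\<dots> \<le> \<psi> t"
      using that tp nn[of t] by (intro mult_left_le_one_le) auto
    finally show ?thesis using tp by simp
  qed
  have b1: "\<psi> s \<le> \<phi> s + \<psi> t1" if "0 \<le> s" for s
  proof (cases "s \<ge> t1")
    case True then show ?thesis using t1 nn[of t1] by simp
  next
    case False
    then have "\<psi> s \<le> \<psi> t1" using mo that by simp
    then show ?thesis using assms(3)[of s] by simp
  qed
  have b2: "\<phi> s \<le> \<psi> s + \<phi> t1" if "0 \<le> s" for s
  proof (cases "s \<ge> t1")
    case True then show ?thesis using t1 assms(3)[of t1] by simp
  next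
    case False
    then have "\<phi> s \<le> \<phi> t1" using assms(2) by (simp add: mono_def)
    then show ?thesis using nn[OF that] by simp
  qed
  show ?thesis
    by (rule that[OF t1 sc mo b1 b2 nn]) auto
qed

lemma jensen_geo:
  fixes \<phi> :: "real \<Rightarrow> real" and x :: "nat \<Rightarrow> real" and y :: real
  assumes "convex_on UNIV \<phi>"
  shows "\<phi> ((\<Sum>n<N. (1/2)^Suc n * x n) + (1/2)^N * y)
         \<le> (\<Sum>n<N. (1/2)^Suc n * \<phi> (x n)) + (1/2)^N * \<phi> y"
proof (induction N arbitrary: y)
  case 0 then show ?case by simp
next
  case (Suc N)
  have e: "(\<Sum>n<Suc N. (1/2)^Suc n * x n) + (1/2)^Suc N * y
      = (\<Sum>n<N. (1/2)^Suc n * x n) + (1/2)^N * ((1 - 1/2) *\<^sub>R x N + (1/2) *\<^sub>R y)"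
    by (simp add: algebra_simps)
  have c: "\<phi> ((1 - 1/2) *\<^sub>R x N + (1/2) *\<^sub>R y) \<le> (1 - 1/2) * \<phi> (x N) + (1/2) * \<phi> y"
    by (rule convex_onD[OF assms]) auto
  have "\<phi> ((\<Sum>n<Suc N. (1/2)^Suc n * x n) + (1/2)^Suc N * y)
      \<le> (\<Sum>n<N. (1/2)^Suc n * \<phi> (x n)) + (1/2)^N * \<phi> ((1 - 1/2) *\<^sub>R x N + (1/2) *\<^sub>R y)"
    unfolding e by (rule Suc.IH)
  also have "\<dots> \<le> (\<Sum>n<N. (1/2)^Suc n * \<phi> (x n)) + (1/2)^N * ((1 - 1/2) * \<phi> (x N) + (1/2) * \<phi> y)"
    using c by (intro add_left_mono mult_left_mono) auto
  also have "\<dots> = (\<Sum>n<Suc N. (1/2)^Suc n * \<phi> (x n)) + (1/2)^Suc N * \<phi> y"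
    by (simp add: algebra_simps)
  finally show ?case .
qed



lemma lemmaJ:
  fixes \<phi> :: "real \<Rightarrow> real" and x b :: "nat \<Rightarrow> real" and T :: real
  assumes cv: "convex_on UNIV \<phi>" and nn: "\<And>t. 0 \<le> \<phi> t" and cont: "\<And>t. isCont \<phi> t"
    and T: "\<And>t. 0 \<le> t \<Longrightarrow> t \<le> \<phi> t + T" and T0: "0 \<le> T"
    and xn: "\<And>n. 0 \<le> x n" and bn: "\<And>n. \<phi> (x n) \<le> b n"
  shows "(\<Sum>n. ennreal ((1/2)^Suc n * x n)) \<le> ((\<Sum>n. ennreal ((1/2)^Suc n * b n)) + ennreal (\<phi> 0)) + ennreal T"
    and "((\<Sum>n. ennreal ((1/2)^Suc n * b n)) + ennreal (\<phi> 0)) \<noteq> \<top> \<Longrightarrow>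
         ennreal (\<phi> (enn2real (\<Sum>n. ennreal ((1/2)^Suc n * x n)))) \<le> (\<Sum>n. ennreal ((1/2)^Suc n * b n)) + ennreal (\<phi> 0)"
proof -
  define W where "W = (\<Sum>n. ennreal ((1/2)^Suc n * x n))"
  define G where "G = (\<Sum>n. ennreal ((1/2)^Suc n * b n)) + ennreal (\<phi> 0)"
  define S where "S N = (\<Sum>n<N. (1/2)^Suc n * x n)" for N
  have Snn: "0 \<le> S N" for N using xn by (auto simp: S_def intro!: sum_nonneg)
  have bnn: "0 \<le> b n" for n using nn[of "x n"] bn[of n] by linarith
  have J: "\<phi> (S N) \<le> (\<Sum>n<N. (1/2)^Suc n * b n) + \<phi> 0" for N
  proof -
    have "\<phi> (S N) = \<phi> (S N + (1/2)^N * 0)" by simp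
    also have "\<dots> \<le> (\<Sum>n<N. (1/2)^Suc n * \<phi> (x n)) + (1/2)^N * \<phi> 0"
      unfolding S_def by (rule jensen_geo[OF cv])
    also have "\<dots> \<le> (\<Sum>n<N. (1/2)^Suc n * b n) + \<phi> 0"
    proof (rule add_mono)
      show "(\<Sum>n<N. (1/2)^Suc n * \<phi> (x n)) \<le> (\<Sum>n<N. (1/2)^Suc n * b n)"
        using bn by (intro sum_mono mult_left_mono) auto
      show "(1/2)^N * \<phi> 0 \<le> \<phi> 0"
        using nn[of 0] by (intro mult_left_le_one_le) (auto simp: power_le_one)
    qed
    finally show ?thesis .
  qed
  have partG: "ennreal (\<phi> (S N)) \<le> G" for N
  proof -
    have "ennreal (\<phi> (S N)) \<le> ennreal ((\<Sum>n<N. (1/2)^Suc n * b n) + \<phi> 0)"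
      using J by (rule ennreal_leI)
    also have "\<dots> = (\<Sum>n<N. ennreal ((1/2)^Suc n * b n)) + ennreal (\<phi> 0)"
      using bnn nn[of 0] by (simp add: sum_nonneg)
    also have "\<dots> \<le> G" unfolding G_def by (intro add_right_mono sum_le_suminf) auto
    finally show ?thesis .
  qed
  have WS: "(\<lambda>N. ennreal (S N)) \<longlonglongrightarrow> W"
  proof -
    have "(\<lambda>N. \<Sum>n<N. ennreal ((1/2)^Suc n * x n)) \<longlonglongrightarrow> W"
      unfolding W_def by (rule summable_LIMSEQ) simp
    moreover have "(\<Sum>n<N. ennreal ((1/2)^Suc n * x n)) = ennreal (S N)" for N
      using xn by (simp add: S_def)
    ultimately show ?thesis by simp
  qed
  have SW: "ennreal (S N) \<le> G + ennreal T" for N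
  proof -
    have "ennreal (S N) \<le> ennreal (\<phi> (S N) + T)" using T[OF Snn] by (rule ennreal_leI)
    also have "\<dots> = ennreal (\<phi> (S N)) + ennreal T" using nn T0 by simp
    also have "\<dots> \<le> G + ennreal T" using partG by (rule add_right_mono)
    finally show ?thesis .
  qed
  have WG: "W \<le> G + ennreal T"
    using WS by (rule LIMSEQ_le_const2) (use SW in blast)
  then show "(\<Sum>n. ennreal ((1/2)^Suc n * x n)) \<le> ((\<Sum>n. ennreal ((1/2)^Suc n * b n)) + ennreal (\<phi> 0)) + ennreal T"
    by (simp add: W_def G_def)
  assume Gt: "((\<Sum>n. ennreal ((1/2)^Suc n * b n)) + ennreal (\<phi> 0)) \<noteq> \<top>"
  then have Gt': "G < \<top>" by (simp add: G_def top.not_eq_extremum)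
  have Wt: "W \<noteq> \<top>"
  proof
    assume "W = \<top>"
    then have "G + ennreal T = \<top>" using WG by (simp add: top_unique)
    then show False using Gt' by simp
  qed
  have "(\<lambda>N. enn2real (ennreal (S N))) \<longlonglongrightarrow> enn2real W"
  proof -
    have "W = ennreal (enn2real W)" using Wt by (simp add: top.not_eq_extremum)
    then have "(\<lambda>N. ennreal (S N)) \<longlonglongrightarrow> ennreal (enn2real W)" using WS by simp
    then show ?thesis by (rule tendsto_enn2real) simp
  qed
  then have St: "S \<longlonglongrightarrow> enn2real W" using Snn by simp
  have "(\<lambda>N. \<phi> (S N)) \<longlonglongrightarrow> \<phi> (enn2real W)"
    by (rule isCont_tendsto_compose[OF cont St])
  moreover have "\<phi> (S N) \<le> enn2real G" for N
  proof -
    have "enn2real (ennreal (\<phi> (S N))) \<le> enn2real G"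
      using partG Gt' by (rule enn2real_mono)
    then show ?thesis using nn by simp
  qed
  ultimately have "\<phi> (enn2real W) \<le> enn2real G"
    by (intro LIMSEQ_le_const2) auto
  then have "ennreal (\<phi> (enn2real W)) \<le> ennreal (enn2real G)" by (rule ennreal_leI)
  moreover have "ennreal (enn2real G) = G" using Gt' by simp
  ultimately have fin: "ennreal (\<phi> (enn2real W)) \<le> G" by simp
  then show "ennreal (\<phi> (enn2real (\<Sum>n. ennreal ((1/2)^Suc n * x n)))) \<le> (\<Sum>n. ennreal ((1/2)^Suc n * b n)) + ennreal (\<phi> 0)"
    unfolding W_def G_def .
qed



interpretation circ: prob_space circle_measure by (rule circle_prob)

lemma orlicz_meas: "u \<in> orlicz_space \<phi> \<Longrightarrow> u \<in> borel_measurable borel"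
  by (simp add: orlicz_space_def meas_circ)

lemma orlicz_integrable:
  assumes "strongly_convex \<phi>" "u \<in> orlicz_space \<phi>"
  shows "integrable circle_measure u"
proof -
  obtain T where T: "T > 0" "\<And>t. 0 \<le> t \<Longrightarrow> t \<le> \<phi> t + T"
    using phi_facts(4)[OF assms(1)] by blast
  have i: "integrable circle_measure (\<lambda>\<zeta>. \<phi> \<bar>u \<zeta>\<bar>)"
    using assms(2) by (simp add: orlicz_space_def)
  have i2: "integrable circle_measure (\<lambda>\<zeta>. \<phi> \<bar>u \<zeta>\<bar> + T)"
    using i by simp
  have m: "u \<in> borel_measurable circle_measure"
    using assms(2) by (simp add: orlicz_space_def)
  have a: "AE \<zeta> in circle_measure. norm (u \<zeta>) \<le> norm (\<phi> \<bar>u \<zeta>\<bar> + T)"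
    using T phi_facts(1)[OF assms(1)] by (auto intro!: AE_I2 simp: add_nonneg_pos)
  show ?thesis by (rule Bochner_Integration.integrable_bound[OF i2 m a])
qed

lemma AE_mu_disc:
  assumes "sets \<mu> = sets borel" "emeasure \<mu> (- ball 0 1) = 0"
  shows "AE z in \<mu>. cmod z < 1"
proof -
  have "- ball (0::complex) 1 \<in> sets borel" by measurable
  then have "- ball (0::complex) 1 \<in> null_sets \<mu>" using assms by (simp add: null_sets_def)
  then show ?thesis by (rule AE_I') auto
qed

lemma B_meas:
  assumes "sets \<mu> = sets borel" "finite_measure \<mu>"
  shows "balayage \<mu> \<in> borel_measurable borel"
proof -
  interpret mu: finite_measure \<mu> by fact
  have sp: "space \<mu> = UNIV" using sets_eq_imp_space_eq[OF assms(1)] by simp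
  have pm: "(\<lambda>p. ennreal (poisson_kernel (snd p) (fst p))) \<in> borel_measurable (borel \<Otimes>\<^sub>M borel)"
    unfolding poisson_kernel_def by measurable
  have eq: "sets (borel \<Otimes>\<^sub>M \<mu>) = sets (borel \<Otimes>\<^sub>M borel)"
    using assms(1) by (intro sets_pair_measure_cong) auto
  have "(\<lambda>p. ennreal (poisson_kernel (snd p) (fst p))) \<in> borel_measurable (borel \<Otimes>\<^sub>M \<mu>)"
    by (subst measurable_cong_sets[OF eq refl]) (rule pm)
  then have "case_prod (\<lambda>\<zeta> z. ennreal (poisson_kernel z \<zeta>)) \<in> borel_measurable (borel \<Otimes>\<^sub>M \<mu>)"
    by (simp add: case_prod_beta')
  then show ?thesis
    unfolding balayage_def by (rule mu.borel_measurable_nn_integral)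
qed

lemma key_identity:
  assumes "sets \<mu> = sets borel" "finite_measure \<mu>" "emeasure \<mu> (- ball 0 1) = 0"
    and um: "u \<in> borel_measurable borel" and ui: "integrable circle_measure u"
  shows "(\<integral>\<^sup>+\<zeta>. ennreal \<bar>u \<zeta>\<bar> * balayage \<mu> \<zeta> \<partial>circle_measure)
       = (\<integral>\<^sup>+z. ennreal (poisson_integral (\<lambda>\<zeta>. \<bar>u \<zeta>\<bar>) z) \<partial>\<mu>)"
proof -
  interpret mu: finite_measure \<mu> by fact
  have sp: "space \<mu> = UNIV" using sets_eq_imp_space_eq[OF assms(1)] by simp
  interpret pair_sigma_finite \<mu> circle_measure
    by unfold_locales
  have [measurable]: "u \<in> borel_measurable borel" by (rule um)
  have f0: "(\<lambda>p. ennreal (poisson_kernel (fst p) (snd p) * \<bar>u (snd p)\<bar>)) \<in> borel_measurable (borel \<Otimes>\<^sub>M borel)"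
    unfolding poisson_kernel_def by measurable
  have "sets (\<mu> \<Otimes>\<^sub>M circle_measure) = sets (borel \<Otimes>\<^sub>M borel)"
    using assms(1) by (intro sets_pair_measure_cong) auto
  then have f: "case_prod (\<lambda>z \<zeta>. ennreal (poisson_kernel z \<zeta> * \<bar>u \<zeta>\<bar>)) \<in> borel_measurable (\<mu> \<Otimes>\<^sub>M circle_measure)"
    using f0 by (simp add: measurable_def space_pair_measure case_prod_beta' sp)
  have pkm: "(\<lambda>z. ennreal (poisson_kernel z \<zeta>)) \<in> borel_measurable \<mu>" for \<zeta>
  proof -
    have "(\<lambda>z. ennreal (poisson_kernel z \<zeta>)) \<in> borel_measurable borel"
      unfolding poisson_kernel_def by measurable
    then show ?thesis using assms(1) by (simp add: measurable_def)
  qed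
  have "(\<integral>\<^sup>+\<zeta>. ennreal \<bar>u \<zeta>\<bar> * balayage \<mu> \<zeta> \<partial>circle_measure)
      = (\<integral>\<^sup>+\<zeta>. (\<integral>\<^sup>+z. ennreal (poisson_kernel z \<zeta> * \<bar>u \<zeta>\<bar>) \<partial>\<mu>) \<partial>circle_measure)"
  proof (rule nn_integral_cong)
    fix \<zeta>
    have "ennreal \<bar>u \<zeta>\<bar> * balayage \<mu> \<zeta> = (\<integral>\<^sup>+z. ennreal \<bar>u \<zeta>\<bar> * ennreal (poisson_kernel z \<zeta>) \<partial>\<mu>)"
      unfolding balayage_def by (rule nn_integral_cmult[OF pkm, symmetric])
    also have "\<dots> = (\<integral>\<^sup>+z. ennreal (poisson_kernel z \<zeta> * \<bar>u \<zeta>\<bar>) \<partial>\<mu>)"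
      by (intro nn_integral_cong) (simp add: ennreal_mult'' mult.commute)
    finally show "ennreal \<bar>u \<zeta>\<bar> * balayage \<mu> \<zeta> = (\<integral>\<^sup>+z. ennreal (poisson_kernel z \<zeta> * \<bar>u \<zeta>\<bar>) \<partial>\<mu>)" .
  qed
  also have "\<dots> = (\<integral>\<^sup>+z. (\<integral>\<^sup>+\<zeta>. ennreal (poisson_kernel z \<zeta> * \<bar>u \<zeta>\<bar>) \<partial>circle_measure) \<partial>\<mu>)"
    by (rule Fubini'[OF f])
  also have "\<dots> = (\<integral>\<^sup>+z. ennreal (poisson_integral (\<lambda>\<zeta>. \<bar>u \<zeta>\<bar>) z) \<partial>\<mu>)"
  proof (rule nn_integral_cong_AE)
    show "AE z in \<mu>. (\<integral>\<^sup>+\<zeta>. ennreal (poisson_kernel z \<zeta> * \<bar>u \<zeta>\<bar>) \<partial>circle_measure)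
        = ennreal (poisson_integral (\<lambda>\<zeta>. \<bar>u \<zeta>\<bar>) z)"
      using AE_mu_disc[OF assms(1,3)]
    proof (rule AE_mp, intro AE_I2 impI)
      fix z :: complex assume z: "cmod z < 1"
      have pm: "(\<lambda>\<zeta>. poisson_kernel z \<zeta> * \<bar>u \<zeta>\<bar>) \<in> borel_measurable borel"
        unfolding poisson_kernel_def by measurable
      have int: "integrable circle_measure (\<lambda>\<zeta>. poisson_kernel z \<zeta> * \<bar>u \<zeta>\<bar>)"
      proof (rule Bochner_Integration.integrable_bound)
        show "integrable circle_measure (\<lambda>\<zeta>. 1 / (1 - cmod z)\<^sup>2 * \<bar>u \<zeta>\<bar>)"
          using ui by (intro integrable_mult_right integrable_abs)
        show "(\<lambda>\<zeta>. poisson_kernel z \<zeta> * \<bar>u \<zeta>\<bar>) \<in> borel_measurable circle_measure"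
          using pm by (simp add: meas_circ)
        show "AE \<zeta> in circle_measure. norm (poisson_kernel z \<zeta> * \<bar>u \<zeta>\<bar>) \<le> norm (1 / (1 - cmod z)\<^sup>2 * \<bar>u \<zeta>\<bar>)"
          using circle_AE
        proof (rule AE_mp, intro AE_I2 impI)
          fix \<zeta> :: complex assume "cmod \<zeta> = 1"
          then have "poisson_kernel z \<zeta> \<le> 1 / (1 - cmod z)\<^sup>2" "0 \<le> poisson_kernel z \<zeta>"
            using pk_bound[OF z] pk_nonneg[of z \<zeta>] z by auto
          then have b1: "poisson_kernel z \<zeta> \<le> 1 / (1 - cmod z)\<^sup>2"
            and nn: "0 \<le> poisson_kernel z \<zeta>" by simp_all
          have h: "poisson_kernel z \<zeta> * \<bar>u \<zeta>\<bar> \<le> 1 / (1 - cmod z)\<^sup>2 * \<bar>u \<zeta>\<bar>"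
            using b1 by (rule mult_right_mono) simp
          have e1: "norm (poisson_kernel z \<zeta> * \<bar>u \<zeta>\<bar>) = poisson_kernel z \<zeta> * \<bar>u \<zeta>\<bar>"
            using nn by simp
          have e2: "norm (1 / (1 - cmod z)\<^sup>2 * \<bar>u \<zeta>\<bar>) = 1 / (1 - cmod z)\<^sup>2 * \<bar>u \<zeta>\<bar>"
            by (simp add: abs_mult)
          show "norm (poisson_kernel z \<zeta> * \<bar>u \<zeta>\<bar>) \<le> norm (1 / (1 - cmod z)\<^sup>2 * \<bar>u \<zeta>\<bar>)"
            unfolding e1 e2 by (rule h)
        qed
      qed
      have "(\<integral>\<^sup>+\<zeta>. ennreal (poisson_kernel z \<zeta> * \<bar>u \<zeta>\<bar>) \<partial>circle_measure)
          = ennreal (\<integral>\<zeta>. poisson_kernel z \<zeta> * \<bar>u \<zeta>\<bar> \<partial>circle_measure)"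
        using int pk_nonneg[of z] z by (intro nn_integral_eq_integral) auto
      then show "(\<integral>\<^sup>+\<zeta>. ennreal (poisson_kernel z \<zeta> * \<bar>u \<zeta>\<bar>) \<partial>circle_measure)
          = ennreal (poisson_integral (\<lambda>\<zeta>. \<bar>u \<zeta>\<bar>) z)"
        by (simp add: poisson_integral_def)
    qed
  qed
  finally show ?thesis .
qed



lemma Lpsi:
  assumes sc: "strongly_convex \<phi>" and am: "admissible_modification \<phi> \<psi>" and u: "u \<in> orlicz_space \<phi>"
  obtains K where "K \<ge> 0"
    "\<And>c. 0 \<le> c \<Longrightarrow> c \<le> 1 \<Longrightarrow> (\<integral>\<^sup>+\<zeta>. ennreal (\<psi> (c * \<bar>u \<zeta>\<bar>)) \<partial>circle_measure) \<le> ennreal (c * K)"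
proof -
  note pf = phi_facts[OF sc]
  obtain t1 where t1: "t1 \<ge> 0"
    and psc: "\<And>x c. 0 \<le> x \<Longrightarrow> 0 \<le> c \<Longrightarrow> c \<le> 1 \<Longrightarrow> \<psi> (c * x) \<le> c * \<psi> x"
    and b1: "\<And>s. 0 \<le> s \<Longrightarrow> \<psi> s \<le> \<phi> s + \<psi> t1"
    and pnn: "\<And>s. 0 \<le> s \<Longrightarrow> 0 \<le> \<psi> s"
    using psi_facts[OF am pf(3) pf(1)] by metis
  have i: "integrable circle_measure (\<lambda>\<zeta>. \<phi> \<bar>u \<zeta>\<bar>)"
    using u by (simp add: orlicz_space_def)
  define K where "K = (\<integral>\<zeta>. \<phi> \<bar>u \<zeta>\<bar> \<partial>circle_measure) + \<psi> t1"
  have K0: "K \<ge> 0"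
    unfolding K_def using pf(1) pnn[OF t1] by (intro add_nonneg_nonneg integral_nonneg) auto
  show ?thesis
  proof (rule that[OF K0])
    fix c :: real assume c: "0 \<le> c" "c \<le> 1"
    have "(\<integral>\<^sup>+\<zeta>. ennreal (\<psi> (c * \<bar>u \<zeta>\<bar>)) \<partial>circle_measure)
        \<le> (\<integral>\<^sup>+\<zeta>. ennreal (c * (\<phi> \<bar>u \<zeta>\<bar> + \<psi> t1)) \<partial>circle_measure)"
    proof (intro nn_integral_mono ennreal_leI)
      fix \<zeta>
      have "\<psi> (c * \<bar>u \<zeta>\<bar>) \<le> c * \<psi> \<bar>u \<zeta>\<bar>" using psc c by simp
      also have "\<dots> \<le> c * (\<phi> \<bar>u \<zeta>\<bar> + \<psi> t1)" using b1[of "\<bar>u \<zeta>\<bar>"] c by (intro mult_left_mono) auto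
      finally show "\<psi> (c * \<bar>u \<zeta>\<bar>) \<le> c * (\<phi> \<bar>u \<zeta>\<bar> + \<psi> t1)" .
    qed
    also have "\<dots> = ennreal (\<integral>\<zeta>. c * (\<phi> \<bar>u \<zeta>\<bar> + \<psi> t1) \<partial>circle_measure)"
      using i c pf(1) pnn[OF t1] by (intro nn_integral_eq_integral) auto
    also have "(\<integral>\<zeta>. c * (\<phi> \<bar>u \<zeta>\<bar> + \<psi> t1) \<partial>circle_measure) = c * K"
    proof -
      have "circ.prob UNIV = 1" using circ.prob_space by simp
      then show ?thesis using i by (simp add: K_def)
    qed
    finally show "(\<integral>\<^sup>+\<zeta>. ennreal (\<psi> (c * \<bar>u \<zeta>\<bar>)) \<partial>circle_measure) \<le> ennreal (c * K)" .
  qed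
qed

lemma orlicz_set_nonempty:
  assumes sc: "strongly_convex \<phi>" and am: "admissible_modification \<phi> \<psi>" and u: "u \<in> orlicz_space \<phi>"
  shows "\<exists>t>0. (\<integral>\<^sup>+\<zeta>. ennreal (\<psi> (\<bar>u \<zeta>\<bar> / t)) \<partial>circle_measure) \<le> ennreal t"
proof -
  obtain K where K: "K \<ge> 0"
    "\<And>c. 0 \<le> c \<Longrightarrow> c \<le> 1 \<Longrightarrow> (\<integral>\<^sup>+\<zeta>. ennreal (\<psi> (c * \<bar>u \<zeta>\<bar>)) \<partial>circle_measure) \<le> ennreal (c * K)"
    using Lpsi[OF sc am u] by metis
  define c where "c = 1 / (1 + K)"
  have c: "0 \<le> c" "c \<le> 1" "c * K \<le> 1 + K" using K(1) by (auto simp: c_def field_simps)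
  have "(\<integral>\<^sup>+\<zeta>. ennreal (\<psi> (\<bar>u \<zeta>\<bar> / (1 + K))) \<partial>circle_measure)
      = (\<integral>\<^sup>+\<zeta>. ennreal (\<psi> (c * \<bar>u \<zeta>\<bar>)) \<partial>circle_measure)"
    by (simp add: c_def)
  also have "\<dots> \<le> ennreal (c * K)" using K(2) c by simp
  also have "\<dots> \<le> ennreal (1 + K)" using c by (intro ennreal_leI) simp
  finally show ?thesis using K(1) by (intro exI[of _ "1 + K"]) simp
qed

lemma orlicz_scale:
  assumes sc: "strongly_convex \<phi>" and am: "admissible_modification \<phi> \<psi>" and u: "u \<in> orlicz_space \<phi>"
  shows "\<exists>c>0. c \<le> 1 \<and> (\<lambda>\<zeta>. c * u \<zeta>) \<in> orlicz_space \<phi> \<and> orlicz_norm \<psi> (\<lambda>\<zeta>. c * u \<zeta>) \<le> 1"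
proof -
  note pf = phi_facts[OF sc]
  obtain K where K: "K \<ge> 0"
    "\<And>c. 0 \<le> c \<Longrightarrow> c \<le> 1 \<Longrightarrow> (\<integral>\<^sup>+\<zeta>. ennreal (\<psi> (c * \<bar>u \<zeta>\<bar>)) \<partial>circle_measure) \<le> ennreal (c * K)"
    using Lpsi[OF sc am u] by metis
  define c where "c = 1 / (1 + K)"
  have c: "0 < c" "c \<le> 1" "c * K \<le> 1" using K(1) by (auto simp: c_def field_simps)
  have [measurable]: "u \<in> borel_measurable borel" using u by (rule orlicz_meas)
  have [measurable]: "\<phi> \<in> borel_measurable borel" by (rule pf(6))
  have sp: "(\<lambda>\<zeta>. c * u \<zeta>) \<in> orlicz_space \<phi>"
    unfolding orlicz_space_def
  proof (intro CollectI conjI)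
    show "(\<lambda>\<zeta>. c * u \<zeta>) \<in> borel_measurable circle_measure"
      unfolding meas_circ by measurable
    have i: "integrable circle_measure (\<lambda>\<zeta>. \<phi> \<bar>u \<zeta>\<bar>)"
      using u by (simp add: orlicz_space_def)
    have m: "(\<lambda>\<zeta>. \<phi> \<bar>c * u \<zeta>\<bar>) \<in> borel_measurable circle_measure"
      unfolding meas_circ by measurable
    have a: "AE \<zeta> in circle_measure. norm (\<phi> \<bar>c * u \<zeta>\<bar>) \<le> norm (\<phi> \<bar>u \<zeta>\<bar>)"
    proof (intro AE_I2)
      fix \<zeta>
      have "\<bar>c * u \<zeta>\<bar> \<le> \<bar>u \<zeta>\<bar>" using c by (simp add: abs_mult mult_left_le_one_le)
      then have "\<phi> \<bar>c * u \<zeta>\<bar> \<le> \<phi> \<bar>u \<zeta>\<bar>" using pf(3) by (simp add: mono_def)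
      then show "norm (\<phi> \<bar>c * u \<zeta>\<bar>) \<le> norm (\<phi> \<bar>u \<zeta>\<bar>)" using pf(1) by simp
    qed
    show "integrable circle_measure (\<lambda>\<zeta>. \<phi> \<bar>c * u \<zeta>\<bar>)"
      by (rule Bochner_Integration.integrable_bound[OF i m a])
  qed
  have "orlicz_norm \<psi> (\<lambda>\<zeta>. c * u \<zeta>) \<le> 1"
    unfolding orlicz_norm_def
  proof (rule cInf_lower)
    have "(\<integral>\<^sup>+\<zeta>. ennreal (\<psi> (\<bar>c * u \<zeta>\<bar> / 1)) \<partial>circle_measure)
        = (\<integral>\<^sup>+\<zeta>. ennreal (\<psi> (c * \<bar>u \<zeta>\<bar>)) \<partial>circle_measure)"
      using c by (simp add: abs_mult)
    also have "\<dots> \<le> ennreal (c * K)" using K(2) c by simp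
    also have "\<dots> \<le> ennreal 1" using c by (intro ennreal_leI) simp
    finally show "1 \<in> {t. 0 < t \<and> (\<integral>\<^sup>+\<zeta>. ennreal (\<psi> (\<bar>c * u \<zeta>\<bar> / t)) \<partial>circle_measure) \<le> ennreal t}"
      by simp
    show "bdd_below {t. 0 < t \<and> (\<integral>\<^sup>+\<zeta>. ennreal (\<psi> (\<bar>c * u \<zeta>\<bar> / t)) \<partial>circle_measure) \<le> ennreal t}"
      by (rule bdd_belowI[of _ 0]) simp
  qed
  then show ?thesis using c sp by blast
qed

lemma orlicz_ball2:
  assumes sc: "strongly_convex \<phi>" and am: "admissible_modification \<phi> \<psi>" and u: "u \<in> orlicz_space \<phi>"
    and n: "orlicz_norm \<psi> u \<le> 1"
  shows "(\<integral>\<^sup>+\<zeta>. ennreal (\<psi> (\<bar>u \<zeta>\<bar> / 2)) \<partial>circle_measure) \<le> 2"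
proof -
  note pf = phi_facts[OF sc]
  obtain t1 where psc: "\<And>x c. 0 \<le> x \<Longrightarrow> 0 \<le> c \<Longrightarrow> c \<le> 1 \<Longrightarrow> \<psi> (c * x) \<le> c * \<psi> x"
    and pnn: "\<And>s. 0 \<le> s \<Longrightarrow> 0 \<le> \<psi> s"
    using psi_facts[OF am pf(3) pf(1)] by metis
  define S where "S = {t. 0 < t \<and> (\<integral>\<^sup>+\<zeta>. ennreal (\<psi> (\<bar>u \<zeta>\<bar> / t)) \<partial>circle_measure) \<le> ennreal t}"
  have ne: "S \<noteq> {}" using orlicz_set_nonempty[OF sc am u] by (auto simp: S_def)
  have bb: "bdd_below S" unfolding S_def by (rule bdd_belowI[of _ 0]) simp
  have "Inf S < 2" using n by (simp add: orlicz_norm_def S_def)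
  then obtain t where t: "t \<in> S" "t < 2" using cInf_less_iff[OF ne bb] by blast
  then have tp: "0 < t" and ti: "(\<integral>\<^sup>+\<zeta>. ennreal (\<psi> (\<bar>u \<zeta>\<bar> / t)) \<partial>circle_measure) \<le> ennreal t"
    by (auto simp: S_def)
  have "(\<integral>\<^sup>+\<zeta>. ennreal (\<psi> (\<bar>u \<zeta>\<bar> / 2)) \<partial>circle_measure)
      \<le> (\<integral>\<^sup>+\<zeta>. ennreal (\<psi> (\<bar>u \<zeta>\<bar> / t)) \<partial>circle_measure)"
  proof (intro nn_integral_mono ennreal_leI)
    fix \<zeta>
    have "\<bar>u \<zeta>\<bar> / 2 = (t / 2) * (\<bar>u \<zeta>\<bar> / t)" using tp by simp
    then have "\<psi> (\<bar>u \<zeta>\<bar> / 2) \<le> (t / 2) * \<psi> (\<bar>u \<zeta>\<bar> / t)"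
      using psc[of "\<bar>u \<zeta>\<bar> / t" "t / 2"] tp t(2) by simp
    also have "\<dots> \<le> \<psi> (\<bar>u \<zeta>\<bar> / t)"
      using pnn[of "\<bar>u \<zeta>\<bar> / t"] tp t(2) by (intro mult_left_le_one_le) auto
    finally show "\<psi> (\<bar>u \<zeta>\<bar> / 2) \<le> \<psi> (\<bar>u \<zeta>\<bar> / t)" .
  qed
  also have "\<dots> \<le> ennreal t" by (rule ti)
  also have "\<dots> \<le> ennreal 2" using t(2) by (intro ennreal_leI) simp
  also have "ennreal 2 = 2" by simp
  finally show ?thesis .
qed



theorem proposition5p1:
  fixes \<phi> \<psi> :: "real \<Rightarrow> real" and \<mu> :: "complex measure"
  assumes "strongly_convex \<phi>"
    and "admissible_modification \<phi> \<psi>"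
    and "sets \<mu> = sets borel" and "finite_measure \<mu>"
    and "emeasure \<mu> (- ball 0 1) = 0"
  shows "(dual_norm \<phi> \<psi> (balayage \<mu>) < \<infinity> \<longleftrightarrow>
           (\<forall>w. w \<in> orlicz_space \<phi> \<and> (AE \<zeta> in circle_measure. 0 \<le> w \<zeta>) \<longrightarrow>
                (\<integral>\<^sup>+ z. ennreal (poisson_integral w z) \<partial>\<mu>) < \<infinity>))
       \<and> dual_norm \<phi> \<psi> (balayage \<mu>) =
           (SUP w \<in> {w. w \<in> orlicz_space \<phi> \<and> (AE \<zeta> in circle_measure. 0 \<le> w \<zeta>)
                       \<and> orlicz_norm \<psi> w \<le> 1}.
              \<integral>\<^sup>+ z. ennreal (poisson_integral w z) \<partial>\<mu>)"
proof -
  note pf = phi_facts[OF assms(1)]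
  have em1[simp]: "emeasure circle_measure UNIV = 1" using circ.emeasure_space_1 by simp
  define F where "F u = (\<integral>\<^sup>+\<zeta>. ennreal \<bar>u \<zeta>\<bar> * balayage \<mu> \<zeta> \<partial>circle_measure)" for u :: "complex \<Rightarrow> real"
  define Gw where "Gw w = (\<integral>\<^sup>+z. ennreal (poisson_integral w z) \<partial>\<mu>)" for w
  define U where "U = {u. u \<in> orlicz_space \<phi> \<and> orlicz_norm \<psi> u \<le> 1}"
  define Ws where "Ws = {w. w \<in> orlicz_space \<phi> \<and> (AE \<zeta> in circle_measure. 0 \<le> w \<zeta>) \<and> orlicz_norm \<psi> w \<le> 1}"
  have DN: "dual_norm \<phi> \<psi> (balayage \<mu>) = (SUP u\<in>U. F u)"
    by (simp add: dual_norm_def U_def F_def)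
  have Bm[measurable]: "balayage \<mu> \<in> borel_measurable borel" by (rule B_meas[OF assms(3,4)])
  have FG: "F u = Gw (\<lambda>\<zeta>. \<bar>u \<zeta>\<bar>)" if "u \<in> orlicz_space \<phi>" for u
    unfolding F_def Gw_def
    by (rule key_identity[OF assms(3,4,5) orlicz_meas[OF that] orlicz_integrable[OF assms(1) that]])
  have GF: "Gw w = F w" if "w \<in> orlicz_space \<phi>" "AE \<zeta> in circle_measure. 0 \<le> w \<zeta>" for w
  proof -
    have [measurable]: "w \<in> borel_measurable borel" by (rule orlicz_meas[OF that(1)])
    have "poisson_integral w z = poisson_integral (\<lambda>\<zeta>. \<bar>w \<zeta>\<bar>) z" for z
      unfolding poisson_integral_def
    proof (rule integral_cong_AE)
      show "(\<lambda>\<zeta>. poisson_kernel z \<zeta> * w \<zeta>) \<in> borel_measurable circle_measure"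
        unfolding meas_circ poisson_kernel_def by measurable
      show "(\<lambda>\<zeta>. poisson_kernel z \<zeta> * \<bar>w \<zeta>\<bar>) \<in> borel_measurable circle_measure"
        unfolding meas_circ poisson_kernel_def by measurable
      show "AE \<zeta> in circle_measure. poisson_kernel z \<zeta> * w \<zeta> = poisson_kernel z \<zeta> * \<bar>w \<zeta>\<bar>"
        using that(2) by (rule AE_mp) (auto intro!: AE_I2)
    qed
    then have "Gw w = Gw (\<lambda>\<zeta>. \<bar>w \<zeta>\<bar>)" by (simp add: Gw_def)
    also have "\<dots> = F w" using FG[OF that(1)] by simp
    finally show ?thesis .
  qed
  have absU: "(\<lambda>\<zeta>. \<bar>u \<zeta>\<bar>) \<in> orlicz_space \<phi>" "orlicz_norm \<psi> (\<lambda>\<zeta>. \<bar>u \<zeta>\<bar>) = orlicz_norm \<psi> u"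
    if "u \<in> orlicz_space \<phi>" for u
    using that by (auto simp: orlicz_space_def orlicz_norm_def intro: borel_measurable_abs)
  have EQ: "dual_norm \<phi> \<psi> (balayage \<mu>) = (SUP w\<in>Ws. Gw w)"
    unfolding DN
  proof (rule SUP_eq)
    fix u assume "u \<in> U"
    then have u: "u \<in> orlicz_space \<phi>" "orlicz_norm \<psi> u \<le> 1" by (auto simp: U_def)
    show "\<exists>w\<in>Ws. F u \<le> Gw w"
      using absU[OF u(1)] u FG[OF u(1)] by (intro bexI[of _ "\<lambda>\<zeta>. \<bar>u \<zeta>\<bar>"]) (auto simp: Ws_def)
  next
    fix w assume "w \<in> Ws"
    then have w: "w \<in> orlicz_space \<phi>" "AE \<zeta> in circle_measure. 0 \<le> w \<zeta>" "orlicz_norm \<psi> w \<le> 1"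
      by (auto simp: Ws_def)
    show "\<exists>u\<in>U. Gw w \<le> F u"
      using w GF[OF w(1,2)] by (intro bexI[of _ w]) (auto simp: U_def)
  qed
  have FWD: "Gw w < \<infinity>" if fin: "dual_norm \<phi> \<psi> (balayage \<mu>) < \<infinity>"
    and w: "w \<in> orlicz_space \<phi>" "AE \<zeta> in circle_measure. 0 \<le> w \<zeta>" for w
  proof -
    obtain c where c: "c > 0" "c \<le> 1" "(\<lambda>\<zeta>. c * w \<zeta>) \<in> orlicz_space \<phi>" "orlicz_norm \<psi> (\<lambda>\<zeta>. c * w \<zeta>) \<le> 1"
      using orlicz_scale[OF assms(1,2) w(1)] by blast
    have "F (\<lambda>\<zeta>. c * w \<zeta>) \<le> dual_norm \<phi> \<psi> (balayage \<mu>)"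
      unfolding DN using c by (intro SUP_upper) (simp add: U_def)
    moreover have "F (\<lambda>\<zeta>. c * w \<zeta>) = ennreal c * F w"
    proof -
      have [measurable]: "w \<in> borel_measurable borel" by (rule orlicz_meas[OF w(1)])
      have "F (\<lambda>\<zeta>. c * w \<zeta>) = (\<integral>\<^sup>+\<zeta>. ennreal c * (ennreal \<bar>w \<zeta>\<bar> * balayage \<mu> \<zeta>) \<partial>circle_measure)"
        unfolding F_def using c by (intro nn_integral_cong) (simp add: abs_mult ennreal_mult mult.assoc)
      also have "\<dots> = ennreal c * F w"
        unfolding F_def by (rule nn_integral_cmult) (simp add: meas_circ)
      finally show ?thesis .
    qed
    ultimately have "ennreal c * F w < \<infinity>" using fin by simp
    then have "F w < \<infinity>" using c by (auto simp: ennreal_mult_less_top)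
    then show ?thesis using GF[OF w] by simp
  qed
  have BWD: "dual_norm \<phi> \<psi> (balayage \<mu>) < \<infinity>"
    if H: "\<forall>w. w \<in> orlicz_space \<phi> \<and> (AE \<zeta> in circle_measure. 0 \<le> w \<zeta>) \<longrightarrow> Gw w < \<infinity>"
  proof (rule ccontr)
    assume "\<not> dual_norm \<phi> \<psi> (balayage \<mu>) < \<infinity>"
    then have "\<not> (SUP u\<in>U. F u) < \<top>" using DN by simp
    then have inf: "(SUP u\<in>U. F u) = \<top>" using top.not_eq_extremum by blast
    have "\<forall>n::nat. \<exists>u\<in>U. ennreal (2^(n+2) * real n) < F u"
    proof
      fix n :: nat
      have "ennreal (2^(n+2) * real n) < (SUP u\<in>U. F u)" unfolding inf by simp
      then show "\<exists>u\<in>U. ennreal (2^(n+2) * real n) < F u" by (simp add: less_SUP_iff)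
    qed
    then obtain us where us: "\<And>n. us n \<in> U" "\<And>n. ennreal (2^(n+2) * real n) < F (us n)"
      by metis
    have usO: "us n \<in> orlicz_space \<phi>" and usN: "orlicz_norm \<psi> (us n) \<le> 1" for n
      using us(1)[of n] by (auto simp: U_def)
    obtain T where T: "T > 0" "\<And>t. 0 \<le> t \<Longrightarrow> t \<le> \<phi> t + T" using pf(4) by blast
    obtain t1 where t1: "t1 \<ge> 0"
      and mo: "\<And>s t. 0 \<le> s \<Longrightarrow> s \<le> t \<Longrightarrow> \<psi> s \<le> \<psi> t"
      and b2: "\<And>s. 0 \<le> s \<Longrightarrow> \<phi> s \<le> \<psi> s + \<phi> t1"
      and pnn: "\<And>s. 0 \<le> s \<Longrightarrow> 0 \<le> \<psi> s"
      using psi_facts[OF assms(2) pf(3) pf(1)] by metis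
    define \<psi>' where "\<psi>' s = \<psi> (max s 0)" for s
    have [measurable]: "\<psi>' \<in> borel_measurable borel"
      by (rule borel_measurable_mono) (auto simp: mono_def \<psi>'_def intro!: mo)
    have [measurable]: "\<phi> \<in> borel_measurable borel" by (rule pf(6))
    have [measurable]: "us n \<in> borel_measurable borel" for n by (rule orlicz_meas[OF usO])
    define x where "x n \<zeta> = \<bar>us n \<zeta>\<bar> / 2" for n \<zeta>
    define b where "b n \<zeta> = \<psi>' (x n \<zeta>) + \<phi> t1" for n \<zeta>
    define W where "W \<zeta> = (\<Sum>n. ennreal ((1/2)^Suc n * x n \<zeta>))" for \<zeta>
    define HH where "HH \<zeta> = (\<Sum>n. ennreal ((1/2)^Suc n * b n \<zeta>)) + ennreal (\<phi> 0)" for \<zeta>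
    define w where "w \<zeta> = enn2real (W \<zeta>)" for \<zeta>
    have xnn: "0 \<le> x n \<zeta>" for n \<zeta> by (simp add: x_def)
    have \<psi>'x: "\<psi>' (x n \<zeta>) = \<psi> (x n \<zeta>)" for n \<zeta> using xnn[of n \<zeta>] by (simp add: \<psi>'_def)
    have bx: "\<phi> (x n \<zeta>) \<le> b n \<zeta>" for n \<zeta> using b2[OF xnn] by (simp add: b_def \<psi>'x)
    have J1: "W \<zeta> \<le> HH \<zeta> + ennreal T" for \<zeta>
      unfolding W_def HH_def
      by (rule lemmaJ(1)[where x="\<lambda>n. x n \<zeta>" and b="\<lambda>n. b n \<zeta>", OF pf(2) pf(1) pf(5) T(2) less_imp_le[OF T(1)] xnn bx])
    have J2: "ennreal (\<phi> (w \<zeta>)) \<le> HH \<zeta>" if "HH \<zeta> \<noteq> \<top>" for \<zeta>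
    proof -
      note L = lemmaJ(2)[where x="\<lambda>n. x n \<zeta>" and b="\<lambda>n. b n \<zeta>", OF pf(2) pf(1) pf(5) T(2) less_imp_le[OF T(1)] xnn bx]
      from that have "(\<Sum>n. ennreal ((1/2)^Suc n * b n \<zeta>)) + ennreal (\<phi> 0) \<noteq> \<top>" unfolding HH_def .
      then show ?thesis unfolding w_def W_def HH_def by (intro L) auto
    qed
    have HHm: "HH \<in> borel_measurable circle_measure"
      unfolding meas_circ HH_def b_def x_def by measurable
    have Wm: "W \<in> borel_measurable borel"
      unfolding W_def x_def by measurable
    have wm[measurable]: "w \<in> borel_measurable borel"
      unfolding w_def using Wm by measurable
    have intb: "(\<integral>\<^sup>+\<zeta>. ennreal (b n \<zeta>) \<partial>circle_measure) \<le> ennreal (2 + \<phi> t1)" for n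
    proof -
      have "(\<integral>\<^sup>+\<zeta>. ennreal (b n \<zeta>) \<partial>circle_measure)
          = (\<integral>\<^sup>+\<zeta>. ennreal (\<psi>' (x n \<zeta>)) + ennreal (\<phi> t1) \<partial>circle_measure)"
        using pnn pf(1) by (intro nn_integral_cong) (simp add: b_def \<psi>'x xnn)
      also have "\<dots> = (\<integral>\<^sup>+\<zeta>. ennreal (\<psi>' (x n \<zeta>)) \<partial>circle_measure) + ennreal (\<phi> t1)"
        by (subst nn_integral_add) (auto simp: meas_circ x_def circ.emeasure_space_1)
      also have "(\<integral>\<^sup>+\<zeta>. ennreal (\<psi>' (x n \<zeta>)) \<partial>circle_measure)
          = (\<integral>\<^sup>+\<zeta>. ennreal (\<psi> (\<bar>us n \<zeta>\<bar> / 2)) \<partial>circle_measure)"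
        by (intro nn_integral_cong) (simp add: \<psi>'_def x_def max_def)
      also have "\<dots> \<le> 2" by (rule orlicz_ball2[OF assms(1,2) usO usN])
      finally show ?thesis using pf(1)[of t1]
        by simp
    qed
    have intHH: "(\<integral>\<^sup>+\<zeta>. HH \<zeta> \<partial>circle_measure) \<noteq> \<top>"
    proof -
      have bm: "(\<lambda>\<zeta>. ennreal ((1/2)^Suc n * b n \<zeta>)) \<in> borel_measurable circle_measure" for n
        unfolding meas_circ b_def x_def by measurable
      have "(\<integral>\<^sup>+\<zeta>. HH \<zeta> \<partial>circle_measure)
          = (\<Sum>n. \<integral>\<^sup>+\<zeta>. ennreal ((1/2)^Suc n * b n \<zeta>) \<partial>circle_measure) + ennreal (\<phi> 0)"
        unfolding HH_def using bm
        by (subst nn_integral_add) (auto simp: nn_integral_suminf circ.emeasure_space_1)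
      also have "\<dots> \<le> (\<Sum>n. ennreal ((1/2)^Suc n * (2 + \<phi> t1))) + ennreal (\<phi> 0)"
      proof (intro add_right_mono suminf_le)
        fix n
        have "(\<integral>\<^sup>+\<zeta>. ennreal ((1/2)^Suc n * b n \<zeta>) \<partial>circle_measure)
            = (\<integral>\<^sup>+\<zeta>. ennreal ((1/2)^Suc n) * ennreal (b n \<zeta>) \<partial>circle_measure)"
          by (intro nn_integral_cong ennreal_mult') simp
        also have "\<dots> = ennreal ((1/2)^Suc n) * (\<integral>\<^sup>+\<zeta>. ennreal (b n \<zeta>) \<partial>circle_measure)"
          by (rule nn_integral_cmult) (simp add: meas_circ b_def x_def)
        also have "\<dots> \<le> ennreal ((1/2)^Suc n) * ennreal (2 + \<phi> t1)"
          by (intro mult_left_mono intb) simp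
        also have "\<dots> = ennreal ((1/2)^Suc n * (2 + \<phi> t1))"
          by (rule ennreal_mult'[symmetric]) simp
        finally show "(\<integral>\<^sup>+\<zeta>. ennreal ((1/2)^Suc n * b n \<zeta>) \<partial>circle_measure) \<le> ennreal ((1/2)^Suc n * (2 + \<phi> t1))" .
      qed auto
      also have "(\<Sum>n. ennreal ((1/2)^Suc n * (2 + \<phi> t1))) = ennreal (\<Sum>n. (1/2)^Suc n * (2 + \<phi> t1))"
        using pf(1)[of t1]
        by (intro suminf_ennreal2) (auto intro!: summable_mult2 simp: summable_geometric)
      finally show ?thesis by (auto simp: top_unique)
    qed
    have AEH: "AE \<zeta> in circle_measure. HH \<zeta> \<noteq> \<top>"
      using nn_integral_PInf_AE[of HH circle_measure] HHm intHH by simp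
    have wnn: "0 \<le> w \<zeta>" for \<zeta> by (simp add: w_def)
    have wO: "w \<in> orlicz_space \<phi>"
      unfolding orlicz_space_def
    proof (intro CollectI conjI)
      show "w \<in> borel_measurable circle_measure" unfolding meas_circ by (rule wm)
      have "(\<integral>\<^sup>+\<zeta>. ennreal (norm (\<phi> \<bar>w \<zeta>\<bar>)) \<partial>circle_measure) \<le> (\<integral>\<^sup>+\<zeta>. HH \<zeta> \<partial>circle_measure)"
        using AEH
      proof (rule nn_integral_mono_AE[OF AE_mp], intro AE_I2 impI)
        fix \<zeta> assume "HH \<zeta> \<noteq> \<top>"
        then show "ennreal (norm (\<phi> \<bar>w \<zeta>\<bar>)) \<le> HH \<zeta>"
          using J2[of \<zeta>] wnn[of \<zeta>] pf(1)[of "w \<zeta>"] by simp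
      qed
      also have "\<dots> < \<top>" using intHH by (simp add: top.not_eq_extremum)
      finally show "integrable circle_measure (\<lambda>\<zeta>. \<phi> \<bar>w \<zeta>\<bar>)"
        unfolding integrable_iff_bounded by (simp add: meas_circ)
    qed
    have w0: "AE \<zeta> in circle_measure. 0 \<le> w \<zeta>" by (simp add: wnn)
    have low: "ennreal (real n) \<le> F w" for n
    proof -
      have e: "(1/2::real)^(n+2) * (2^(n+2) * real n) = real n"
        by (simp add: power_one_over)
      have "ennreal (real n) = ennreal ((1/2)^(n+2)) * ennreal (2^(n+2) * real n)"
        using e by (simp add: ennreal_mult'[symmetric])
      also have "\<dots> \<le> ennreal ((1/2)^(n+2)) * F (us n)"
        using us(2)[of n] by (intro mult_left_mono) auto
      also have "\<dots> = (\<integral>\<^sup>+\<zeta>. ennreal ((1/2)^(n+2)) * (ennreal \<bar>us n \<zeta>\<bar> * balayage \<mu> \<zeta>) \<partial>circle_measure)"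
        unfolding F_def by (rule nn_integral_cmult[symmetric]) (simp add: meas_circ)
      also have "\<dots> = (\<integral>\<^sup>+\<zeta>. ennreal ((1/2)^Suc n * x n \<zeta>) * balayage \<mu> \<zeta> \<partial>circle_measure)"
      proof (intro nn_integral_cong)
        fix \<zeta>
        have eq: "(1/2::real)^Suc n * x n \<zeta> = (1/2)^(n+2) * \<bar>us n \<zeta>\<bar>"
          by (simp add: x_def)
        have e: "ennreal ((1/2)^Suc n * x n \<zeta>) = ennreal ((1/2)^(n+2)) * ennreal \<bar>us n \<zeta>\<bar>"
          unfolding eq by (rule ennreal_mult') simp
        show "ennreal ((1/2)^(n+2)) * (ennreal \<bar>us n \<zeta>\<bar> * balayage \<mu> \<zeta>)
            = ennreal ((1/2)^Suc n * x n \<zeta>) * balayage \<mu> \<zeta>"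
          unfolding e by (simp only: mult.assoc)
      qed
      also have "\<dots> \<le> F w"
        unfolding F_def using AEH
      proof (rule nn_integral_mono_AE[OF AE_mp], intro AE_I2 impI)
        fix \<zeta> assume h: "HH \<zeta> \<noteq> \<top>"
        have "W \<zeta> \<noteq> \<top>"
        proof
          assume "W \<zeta> = \<top>"
          then have "HH \<zeta> + ennreal T = \<top>" using J1[of \<zeta>] by (simp add: top_unique)
          then show False using h by simp
        qed
        then have "ennreal \<bar>w \<zeta>\<bar> = W \<zeta>" using wnn[of \<zeta>] by (simp add: w_def top.not_eq_extremum)
        moreover have "ennreal ((1/2)^Suc n * x n \<zeta>) \<le> W \<zeta>"
        proof -
          have "(\<Sum>i\<in>{n}. ennreal ((1/2)^Suc i * x i \<zeta>)) \<le> W \<zeta>"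
            unfolding W_def by (rule sum_le_suminf) auto
          then show ?thesis by simp
        qed
        ultimately show "ennreal ((1/2)^Suc n * x n \<zeta>) * balayage \<mu> \<zeta> \<le> ennreal \<bar>w \<zeta>\<bar> * balayage \<mu> \<zeta>"
          by (intro mult_right_mono) auto
      qed
      finally show ?thesis .
    qed
    have "F w = \<top>"
    proof (rule ccontr)
      assume "F w \<noteq> \<top>"
      then obtain r where r: "F w = ennreal r" "0 \<le> r" by (cases "F w") auto
      obtain n :: nat where "r < real n" using reals_Archimedean2 by blast
      moreover have "ennreal (real n) \<le> ennreal r" using low[of n] r by simp
      ultimately show False using r(2) by (simp add: ennreal_le_iff)
    qed
    moreover have "Gw w < \<infinity>" using H wO w0 by blast
    ultimately show False using GF[OF wO w0] by simp
  qed
  show ?thesis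
    using FWD BWD EQ by (auto simp: Gw_def Ws_def)
qed

end
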